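(* Let $\lambda\mapsto (g_{ab}(\lambda), n(\lambda), s(\lambda), u^a(\lambda))$ be any smooth one-parameter family of Einstein–perfect-fluid field configurations on a 4-manifold (not necessarily satisfying any field equations), with $u^a(\lambda)u^b(\lambda)g_{ab}(\lambda)=-1$. Define $N_{def}(\lambda)=n(\lambda)u^a(\lambda)\epsilon_{adef}(\lambda)$ and $S_{def}(\lambda)=s(\lambda)N_{def}(\lambda)$. Then for every $\lambda$, $$u^a\Big[\tfrac12 T^{bc}\frac{dg_{bc}}{d\lambda}\epsilon_{adef}-\frac{d}{d\lambda}\big(T_a{}^b\epsilon_{bdef}\big)\Big]=\mu\frac{dN_{def}}{d\lambda}+T\frac{dS_{def}}{d\lambda},$$ where all undifferentiated quantities are evaluated at $\lambda$.
   Context: A perfect fluid is specified by a smooth function $\rho(n,s)$ of the particle number density $n>0$ and the entropy per particle $s$. Define the temperature $T=\frac1n\frac{\partial\rho}{\partial s}$, the chemical potential $\mu=\frac{\partial\rho}{\partial n}-Ts$, and the pressure $p=n\frac{\partial\rho}{\partial n}-\rho$ (so $p=-\rho+\mu n+Tsn$ and $d\rho=Td(ns)+\mu dn$). On a spacetime with metric $g_{ab}$ and volume form $\epsilon_{abcd}$, the fluid has unit timelike 4-velocity $u^a$ and stress-energy tensor $T_{ab}=(\rho+p)u_au_b+pg_{ab}$, with indices raised by $g^{ab}$. *)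

theory Defs
  imports "HOL-Analysis.Analysis" "HOL-Library.Numeral_Type"
begin

text \<open>Everything is evaluated at one fixed (arbitrary) spacetime point, in a coordinate
  chart; spacetime indices range over the 4-element type 4. Only lambda-derivatives occur.\<close>

type_synonym vec4 = "real ^ 4"
type_synonym mat4 = "real ^ 4 ^ 4"

definition smooth1 :: "(real \<Rightarrow> real) \<Rightarrow> bool" where
  "smooth1 f \<longleftrightarrow> (\<exists>D :: nat \<Rightarrow> real \<Rightarrow> real. D 0 = f \<and>
     (\<forall>k x. (D k has_real_derivative D (Suc k) x) (at x)))"

definition smooth2_on :: "(real \<times> real) set \<Rightarrow> (real \<Rightarrow> real \<Rightarrow> real) \<Rightarrow> bool" where
  "smooth2_on U f \<longleftrightarrow> (\<exists>D :: nat \<Rightarrow> nat \<Rightarrow> real \<Rightarrow> real \<Rightarrow> real. D 0 0 = f \<and>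
     (\<forall>i j x y. (x, y) \<in> U \<longrightarrow>
        ((\<lambda>(a, b). D i j a b) has_derivative
           (\<lambda>(h, k). D (Suc i) j x y * h + D i (Suc j) x y * k)) (at (x, y))))"

definition rho_n :: "(real \<Rightarrow> real \<Rightarrow> real) \<Rightarrow> real \<Rightarrow> real \<Rightarrow> real" where
  "rho_n rho n s = deriv (\<lambda>x. rho x s) n"
definition rho_s :: "(real \<Rightarrow> real \<Rightarrow> real) \<Rightarrow> real \<Rightarrow> real \<Rightarrow> real" where
  "rho_s rho n s = deriv (\<lambda>y. rho n y) s"

definition temperature :: "(real \<Rightarrow> real \<Rightarrow> real) \<Rightarrow> real \<Rightarrow> real \<Rightarrow> real" where
  "temperature rho n s = (1 / n) * rho_s rho n s"
definition chempot :: "(real \<Rightarrow> real \<Rightarrow> real) \<Rightarrow> real \<Rightarrow> real \<Rightarrow> real" where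
  "chempot rho n s = rho_n rho n s - temperature rho n s * s"
definition pressure :: "(real \<Rightarrow> real \<Rightarrow> real) \<Rightarrow> real \<Rightarrow> real \<Rightarrow> real" where
  "pressure rho n s = n * rho_n rho n s - rho n s"

text \<open>Levi-Civita symbol [abcd] (with [1234] = 1) and the metric volume form
  eps_abcd = sqrt(-det g) [abcd] (orientation given by the chart).\<close>
definition levi :: "4 \<Rightarrow> 4 \<Rightarrow> 4 \<Rightarrow> 4 \<Rightarrow> real" where
  "levi a b c d = det (\<chi> i. axis (if i = 1 then a else if i = 2 then b else if i = 3 then c else d) (1::real))"

definition vol :: "mat4 \<Rightarrow> 4 \<Rightarrow> 4 \<Rightarrow> 4 \<Rightarrow> 4 \<Rightarrow> real" where
  "vol g a b c d = sqrt (- det g) * levi a b c d"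

definition eta :: mat4 where
  "eta = (\<chi> i j. if i = j then (if i = 1 then -1 else 1) else 0)"
definition lorentzian :: "mat4 \<Rightarrow> bool" where
  "lorentzian g \<longleftrightarrow> (\<exists>P :: mat4. invertible P \<and> g = transpose P ** eta ** P)"

definition ginv :: "mat4 \<Rightarrow> mat4" where "ginv g = matrix_inv g"

definition lower :: "mat4 \<Rightarrow> vec4 \<Rightarrow> 4 \<Rightarrow> real" where
  "lower g u a = (\<Sum>b\<in>UNIV. g $ a $ b * u $ b)"

definition Tdd :: "(real \<Rightarrow> real \<Rightarrow> real) \<Rightarrow> mat4 \<Rightarrow> real \<Rightarrow> real \<Rightarrow> vec4 \<Rightarrow> 4 \<Rightarrow> 4 \<Rightarrow> real" where
  "Tdd rho g n s u a b = (rho n s + pressure rho n s) * lower g u a * lower g u b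
     + pressure rho n s * g $ a $ b"

definition Tdu :: "(real \<Rightarrow> real \<Rightarrow> real) \<Rightarrow> mat4 \<Rightarrow> real \<Rightarrow> real \<Rightarrow> vec4 \<Rightarrow> 4 \<Rightarrow> 4 \<Rightarrow> real" where
  "Tdu rho g n s u a b = (\<Sum>c\<in>UNIV. Tdd rho g n s u a c * ginv g $ c $ b)"

definition Tuu :: "(real \<Rightarrow> real \<Rightarrow> real) \<Rightarrow> mat4 \<Rightarrow> real \<Rightarrow> real \<Rightarrow> vec4 \<Rightarrow> 4 \<Rightarrow> 4 \<Rightarrow> real" where
  "Tuu rho g n s u a b = (\<Sum>c\<in>UNIV. \<Sum>d\<in>UNIV. ginv g $ a $ c * ginv g $ b $ d * Tdd rho g n s u c d)"

definition Nflux :: "mat4 \<Rightarrow> real \<Rightarrow> vec4 \<Rightarrow> 4 \<Rightarrow> 4 \<Rightarrow> 4 \<Rightarrow> real" where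
  "Nflux g n u d e f = n * (\<Sum>a\<in>UNIV. u $ a * vol g a d e f)"

end

theory Submission
  imports Defs
begin


lemma minv:
  assumes "invertible (A::real^'n^'n)"
  shows "A ** matrix_inv A = mat 1" "matrix_inv A ** A = mat 1"
  using someI_ex[OF assms[unfolded invertible_def]] unfolding matrix_inv_def by auto

lemma smooth1_D:
  assumes "smooth1 f" shows "(f has_real_derivative deriv f x) (at x)"
proof -
  obtain D where D: "D 0 = f" "\<And>k x. (D k has_real_derivative D (Suc k) x) (at x)"
    using assms unfolding smooth1_def by blast
  have "(f has_real_derivative D 1 x) (at x)" using D(2)[of 0 x] D(1) by simp
  then show ?thesis using DERIV_imp_deriv by metis
qed

lemma cramer_inv:
  assumes "invertible (A::real^'n^'n)"
  shows "det (\<chi> i j. if j = k then b$i else A$i$j) = (matrix_inv A *v b)$k * det A"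
proof -
  have e: "A *v (matrix_inv A *v b) = b"
    by (simp add: matrix_vector_mul_assoc minv(1)[OF assms])
  show ?thesis using cramer_lemma[where A=A and k=k and x="matrix_inv A *v b"] unfolding e .
qed

lemma lor_props:
  assumes "lorentzian g"
  shows "det g < 0" "\<And>i j. g$i$j = g$j$i"
proof -
  obtain P where P: "invertible P" "g = transpose P ** eta ** P"
    using assms unfolding lorentzian_def by blast
  have "det eta = (\<Prod>i\<in>UNIV. eta$i$i)"
    by (rule det_diagonal) (simp add: eta_def)
  also have "\<dots> = -1" by (simp add: eta_def)
  finally have de: "det eta = -1" .
  have "det P \<noteq> 0" using P(1) invertible_det_nz by blast
  then show "det g < 0" using P(2) de by (simp add: det_mul zero_less_mult_iff) linarith
  have "transpose eta = eta" by (auto simp: eta_def transpose_def vec_eq_iff)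
  then have "transpose g = g" using P(2) by (simp add: matrix_transpose_mul matrix_mul_assoc)
  then have "\<And>i j. transpose g $ j $ i = g $ j $ i" by simp
  then show "\<And>i j. g$i$j = g$j$i" by (simp add: transpose_def)
qed



lemma jacobi_term:
  fixes a b :: "'n::finite \<Rightarrow> real"
  assumes p: "p permutes (UNIV::'n set)"
  shows "(\<Sum>k\<in>UNIV. \<Prod>i\<in>UNIV. if p i = k then a i else b i)
       = (\<Sum>k\<in>UNIV. a k * (\<Prod>y\<in>UNIV-{k}. b y))"
proof -
  have bij: "bij_betw p UNIV UNIV" using p by (simp add: permutes_imp_bij)
  have inj: "\<And>i k. (p i = p k) = (i = k)" using p by (metis permutes_inj injD)
  have "(\<Sum>k\<in>UNIV. \<Prod>i\<in>UNIV. if p i = k then a i else b i)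
      = (\<Sum>k\<in>UNIV. \<Prod>i\<in>UNIV. if p i = p k then a i else b i)"
    using sum.reindex_bij_betw[OF bij, of "\<lambda>k. \<Prod>i\<in>UNIV. if p i = k then a i else b i"] by simp
  also have "\<dots> = (\<Sum>k\<in>UNIV. \<Prod>i\<in>UNIV. if i = k then a i else b i)" by (simp add: inj)
  also have "\<dots> = (\<Sum>k\<in>UNIV. a k * (\<Prod>y\<in>UNIV-{k}. b y))"
  proof (rule sum.cong[OF refl])
    fix k
    have "(\<Prod>i\<in>UNIV. if i = k then a i else b i)
        = (if k = k then a k else b k) * (\<Prod>i\<in>UNIV-{k}. if i = k then a i else b i)"
      by (rule prod.remove) auto
    also have "\<dots> = a k * (\<Prod>y\<in>UNIV-{k}. b y)" by (auto intro!: prod.cong)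
    finally show "(\<Prod>i\<in>UNIV. if i = k then a i else b i) = a k * (\<Prod>y\<in>UNIV-{k}. b y)" .
  qed
  finally show ?thesis .
qed

lemma jacobi:
  fixes G :: "real \<Rightarrow> real^'n^'n" and G' :: "real^'n^'n"
  assumes "\<And>i j. ((\<lambda>t. G t $ i $ j) has_real_derivative G' $ i $ j) (at x)"
  shows "((\<lambda>t. det (G t)) has_real_derivative
           (\<Sum>k\<in>UNIV. det (\<chi> i j. if j = k then G' $ i $ j else G x $ i $ j))) (at x)"
proof -
  have d: "((\<lambda>t. det (G t)) has_real_derivative
      (\<Sum>p\<in>{p. p permutes (UNIV::'n set)}. of_int (sign p) *
          (\<Sum>k\<in>UNIV. G' $ k $ p k * (\<Prod>y\<in>UNIV-{k}. G x $ y $ p y)))) (at x)"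
    unfolding det_def by (intro DERIV_sum DERIV_cmult has_field_derivative_prod assms)
  have "(\<Sum>k\<in>UNIV. det (\<chi> i j. if j = k then G' $ i $ j else G x $ i $ j))
     = (\<Sum>k\<in>UNIV. \<Sum>p\<in>{p. p permutes (UNIV::'n set)}. of_int (sign p) *
          (\<Prod>i\<in>UNIV. if p i = k then G' $ i $ p i else G x $ i $ p i))"
    unfolding det_def by (auto intro!: sum.cong prod.cong)
  also have "\<dots> = (\<Sum>p\<in>{p. p permutes (UNIV::'n set)}. of_int (sign p) *
          (\<Sum>k\<in>UNIV. \<Prod>i\<in>UNIV. if p i = k then G' $ i $ p i else G x $ i $ p i))"
    by (subst sum.swap) (simp add: sum_distrib_left)
  also have "\<dots> = (\<Sum>p\<in>{p. p permutes (UNIV::'n set)}. of_int (sign p) *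
          (\<Sum>k\<in>UNIV. G' $ k $ p k * (\<Prod>y\<in>UNIV-{k}. G x $ y $ p y)))"
    by (rule sum.cong[OF refl]) (simp add: jacobi_term[where a="\<lambda>i. G' $ i $ _ i"])
  finally show ?thesis using d by simp
qed



lemma comp2:
  assumes F: "((\<lambda>(a,b). F a b) has_derivative (\<lambda>(h,k). Fa * h + Fb * k)) (at (n x, s x))"
    and n: "(n has_real_derivative nd) (at x)" and s: "(s has_real_derivative sd) (at x)"
  shows "((\<lambda>t. F (n t) (s t)) has_real_derivative Fa* nd + Fb* sd) (at x)"
proof -
  have p: "((\<lambda>t. (n t, s t)) has_derivative (\<lambda>h. (nd * h, sd * h))) (at x)"
    using has_derivative_Pair[OF n[unfolded has_field_derivative_def] s[unfolded has_field_derivative_def]] by simp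
  have "((\<lambda>(a,b). F a b) \<circ> (\<lambda>t. (n t, s t)) has_derivative (\<lambda>(h,k). Fa*h+Fb*k) \<circ> (\<lambda>h. (nd*h, sd*h))) (at x)"
    by (rule diff_chain_at[OF p]) (simp add: F)
  then have "((\<lambda>t. F (n t) (s t)) has_derivative (\<lambda>(h,k). Fa*h+Fb*k) \<circ> (\<lambda>h. (nd*h, sd*h))) (at x)"
    by (simp add: o_def)
  then have "((\<lambda>t. F (n t) (s t)) has_derivative (*) (Fa* nd + Fb* sd)) (at x)"
    by (rule has_derivative_eq_rhs) (auto simp: o_def algebra_simps)
  then show ?thesis unfolding has_field_derivative_def .
qed

lemma partials:
  assumes D0: "D 0 0 = rho"
    and DD: "\<And>i j x y. x > 0 \<Longrightarrow> ((\<lambda>(a,b). D i j a b) has_derivative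
           (\<lambda>(h,k). D (Suc i) j x y * h + D i (Suc j) x y * k)) (at (x, y))"
    and x: "x > 0"
  shows "rho_n rho x y = D 1 0 x y" "rho_s rho x y = D 0 1 x y"
proof -
  have "((\<lambda>t. D 0 0 ((\<lambda>t. t) t) ((\<lambda>t. y) t)) has_real_derivative D 1 0 x y * 1 + D 0 1 x y * 0) (at x)"
    by (rule comp2) (use DD[OF x, of 0 0] in \<open>auto intro!: derivative_eq_intros\<close>)
  then have "((\<lambda>t. rho t y) has_real_derivative D 1 0 x y) (at x)" using D0 by simp
  then show "rho_n rho x y = D 1 0 x y" unfolding rho_n_def by (rule DERIV_imp_deriv)
  have "((\<lambda>t. D 0 0 ((\<lambda>t. x) t) ((\<lambda>t. t) t)) has_real_derivative D 1 0 x y * 0 + D 0 1 x y * 1) (at y)"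
    by (rule comp2) (use DD[OF x, of 0 0] in \<open>auto intro!: derivative_eq_intros\<close>)
  then have "((\<lambda>t. rho x t) has_real_derivative D 0 1 x y) (at y)" using D0 by simp
  then show "rho_s rho x y = D 0 1 x y" unfolding rho_s_def by (rule DERIV_imp_deriv)
qed



lemma mul_inv_entry:
  assumes "invertible (A::real^'n^'n)"
  shows "(\<Sum>c\<in>UNIV. A$a$c * matrix_inv A $c$b) = (if a = b then 1 else 0)"
    "(\<Sum>c\<in>UNIV. matrix_inv A$a$c * A $c$b) = (if a = b then 1 else 0)"
proof -
  have "(A ** matrix_inv A) $ a $ b = mat 1 $ a $ b" using minv(1)[OF assms] by simp
  then show "(\<Sum>c\<in>UNIV. A$a$c * matrix_inv A $c$b) = (if a = b then 1 else 0)"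
    by (simp add: matrix_matrix_mult_def mat_def)
  have "(matrix_inv A ** A) $ a $ b = mat 1 $ a $ b" using minv(2)[OF assms] by simp
  then show "(\<Sum>c\<in>UNIV. matrix_inv A$a$c * A $c$b) = (if a = b then 1 else 0)"
    by (simp add: matrix_matrix_mult_def mat_def)
qed

lemma sum_delta: "(\<Sum>c\<in>(UNIV::'n::finite set). (if a = c then 1 else 0) * (x c::real)) = x a"
  "(\<Sum>c\<in>(UNIV::'n::finite set). (x c::real) * (if c = a then 1 else 0)) = x a"
  by (simp_all add: if_distrib if_distribR sum.delta cong: if_cong)

lemma low_inv:
  assumes inv: "invertible g" and sym: "\<And>i j. g$i$j = g$j$i"
  shows "(\<Sum>c\<in>UNIV. lower g u c * matrix_inv g $ c $ b) = u $ b"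
proof -
  have "(\<Sum>c\<in>UNIV. lower g u c * matrix_inv g $ c $ b)
      = (\<Sum>e\<in>UNIV. u $ e * (\<Sum>c\<in>UNIV. g $ e $ c * matrix_inv g $ c $ b))"
    unfolding lower_def sum_distrib_left sum_distrib_right by (subst sum.swap) (simp add: sym mult_ac)
  also have "\<dots> = u $ b" by (simp add: mul_inv_entry[OF inv] sum_delta)
  finally show ?thesis .
qed

lemma inv_low:
  assumes inv: "invertible g"
  shows "(\<Sum>c\<in>UNIV. matrix_inv g $ b $ c * lower g u c) = u $ b"
proof -
  have "(\<Sum>c\<in>UNIV. matrix_inv g $ b $ c * lower g u c)
      = (\<Sum>e\<in>UNIV. (\<Sum>c\<in>UNIV. matrix_inv g $ b $ c * g $ c $ e) * u $ e)"
    unfolding lower_def sum_distrib_left sum_distrib_right by (subst sum.swap) (simp add: mult_ac)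
  also have "\<dots> = u $ b" by (simp add: mul_inv_entry[OF inv] sum_delta)
  finally show ?thesis .
qed

lemma tuu_split:
  fixes A B a :: "'n::finite \<Rightarrow> real"
  shows "(\<Sum>x\<in>UNIV. \<Sum>y\<in>UNIV. A x * B y * (k * a x * a y + p * M x y))
   = k * (\<Sum>x\<in>UNIV. A x * a x) * (\<Sum>y\<in>UNIV. B y * a y) + p * (\<Sum>x\<in>UNIV. \<Sum>y\<in>UNIV. A x * B y * M x y)"
  by (simp add: algebra_simps sum.distrib sum_distrib_left sum_distrib_right)

lemma Tuu_eq:
  assumes inv: "invertible g" and sym: "\<And>i j. g$i$j = g$j$i"
  shows "Tuu rho g n s u b c = (rho n s + pressure rho n s) * u$b * u$c + pressure rho n s * matrix_inv g $ c $ b"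
proof -
  have "Tuu rho g n s u b c = (rho n s + pressure rho n s) *
     (\<Sum>x\<in>UNIV. matrix_inv g $ b $ x * lower g u x) * (\<Sum>y\<in>UNIV. matrix_inv g $ c $ y * lower g u y)
     + pressure rho n s * (\<Sum>x\<in>UNIV. \<Sum>y\<in>UNIV. matrix_inv g $ b $ x * matrix_inv g $ c $ y * g $ x $ y)"
    unfolding Tuu_def Tdd_def ginv_def by (rule tuu_split)
  also have "(\<Sum>x\<in>UNIV. \<Sum>y\<in>UNIV. matrix_inv g $ b $ x * matrix_inv g $ c $ y * g $ x $ y)
     = (\<Sum>y\<in>UNIV. (\<Sum>x\<in>UNIV. matrix_inv g $ b $ x * g $ x $ y) * matrix_inv g $ c $ y)"
    unfolding sum_distrib_left sum_distrib_right by (subst sum.swap) (simp add: mult_ac)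
  also have "\<dots> = matrix_inv g $ c $ b" by (simp add: mul_inv_entry[OF inv] sum_delta)
  finally show ?thesis by (simp add: inv_low[OF inv])
qed

lemma Tdu_eq:
  assumes inv: "invertible g" and sym: "\<And>i j. g$i$j = g$j$i"
  shows "Tdu rho g n s u a b = (rho n s + pressure rho n s) * lower g u a * u$b
            + pressure rho n s * (if a = b then 1 else 0)"
proof -
  have "Tdu rho g n s u a b = (rho n s + pressure rho n s) * lower g u a * (\<Sum>c\<in>UNIV. lower g u c * matrix_inv g $ c $ b)
     + pressure rho n s * (\<Sum>c\<in>UNIV. g$a$c * matrix_inv g $ c $ b)"
    unfolding Tdu_def Tdd_def ginv_def by (simp add: algebra_simps sum.distrib sum_distrib_left)
  then show ?thesis by (simp add: low_inv[OF inv sym] mul_inv_entry[OF inv])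
qed



lemma F1_alg:
  fixes u z :: "'n::finite \<Rightarrow> real"
  shows "(\<Sum>b\<in>UNIV. (k * y * u b + p * (if a = b then 1 else 0)) * z b) = k * y * (\<Sum>b\<in>UNIV. u b * z b) + p * z a"
proof -
  have e: "\<And>b. (k * y * u b + p * (if a = b then 1 else 0)) * z b = k * y * (u b * z b) + (if a = b then p * z b else 0)"
    by (simp add: algebra_simps)
  show ?thesis unfolding e sum.distrib sum_distrib_left[symmetric] by simp
qed

theorem lemma1:
  fixes rho :: "real \<Rightarrow> real \<Rightarrow> real"
    and g :: "real \<Rightarrow> mat4" and n s :: "real \<Rightarrow> real" and u :: "real \<Rightarrow> vec4"
    and l :: real and d e f :: 4
  assumes rho_smooth: "smooth2_on {(x, y). x > 0} rho"
    and g_smooth: "\<And>i j. smooth1 (\<lambda>t. g t $ i $ j)"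
    and n_smooth: "smooth1 n" and s_smooth: "smooth1 s"
    and u_smooth: "\<And>i. smooth1 (\<lambda>t. u t $ i)"
    and g_lor: "\<And>t. lorentzian (g t)"
    and n_pos: "\<And>t. n t > 0"
    and u_norm: "\<And>t. (\<Sum>a\<in>UNIV. \<Sum>b\<in>UNIV. u t $ a * u t $ b * g t $ a $ b) = -1"
  shows "(\<Sum>a\<in>UNIV. u l $ a *
            ((1/2) * (\<Sum>b\<in>UNIV. \<Sum>c\<in>UNIV. Tuu rho (g l) (n l) (s l) (u l) b c
                         * deriv (\<lambda>t. g t $ b $ c) l) * vol (g l) a d e f
             - deriv (\<lambda>t. \<Sum>b\<in>UNIV. Tdu rho (g t) (n t) (s t) (u t) a b * vol (g t) b d e f) l))
       = chempot rho (n l) (s l) * deriv (\<lambda>t. Nflux (g t) (n t) (u t) d e f) l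
         + temperature rho (n l) (s l) * deriv (\<lambda>t. s t * Nflux (g t) (n t) (u t) d e f) l"
proof -
  obtain D where D0: "D 0 0 = rho" and DD0: "\<And>i j x y. (x, y) \<in> {(x, y). x > 0} \<Longrightarrow>
        ((\<lambda>(a, b). D i j a b) has_derivative
           (\<lambda>(h, k). D (Suc i) j x y * h + D i (Suc j) x y * k)) (at (x, y))"
    using rho_smooth unfolding smooth2_on_def by blast
  have DD: "\<And>i j x y. x > 0 \<Longrightarrow> ((\<lambda>(a, b). D i j a b) has_derivative
           (\<lambda>(h, k). D (Suc i) j x y * h + D i (Suc j) x y * k)) (at (x, y))"
    using DD0 by auto
  define gd where "gd = (\<chi> i j. deriv (\<lambda>t. g t $ i $ j) l)"
  have gD: "\<And>i j. ((\<lambda>t. g t $ i $ j) has_real_derivative gd $ i $ j) (at l)"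
    using smooth1_D[OF g_smooth] by (simp add: gd_def)
  define ud where "ud = (\<chi> i. deriv (\<lambda>t. u t $ i) l)"
  have uD: "\<And>i. ((\<lambda>t. u t $ i) has_real_derivative ud $ i) (at l)"
    using smooth1_D[OF u_smooth] by (simp add: ud_def)
  define nd where "nd = deriv n l"
  have nD: "(n has_real_derivative nd) (at l)" using smooth1_D[OF n_smooth] by (simp add: nd_def)
  define sd where "sd = deriv s l"
  have sD: "(s has_real_derivative sd) (at l)" using smooth1_D[OF s_smooth] by (simp add: sd_def)
  have detneg: "\<And>t. det (g t) < 0" using lor_props(1)[OF g_lor] .
  have sym: "\<And>t i j. g t $i$j = g t $j$i" using lor_props(2)[OF g_lor] .
  have inv: "\<And>t. invertible (g t)" using detneg invertible_det_nz by (metis less_irrefl)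
  define Gi where "Gi = matrix_inv (g l)"
  define sq where "sq t = sqrt (- det (g t))" for t
  define L where "L a = levi a d e f" for a
  have volsq: "\<And>t a. vol (g t) a d e f = sq t * L a" by (simp add: vol_def sq_def L_def)
  have sqpos: "\<And>t. sq t > 0" using detneg by (simp add: sq_def)
  have sq2: "sq l * sq l = - det (g l)" using detneg[of l] by (simp add: sq_def)
  define tr where "tr = (\<Sum>b\<in>UNIV. \<Sum>c\<in>UNIV. Gi$c$b * gd$b$c)"
  have "((\<lambda>t. det (g t)) has_real_derivative
           (\<Sum>k\<in>UNIV. det (\<chi> i j. if j = k then gd $ i $ j else g l $ i $ j))) (at l)"
    by (rule jacobi) (rule gD)
  moreover have "(\<Sum>k\<in>UNIV. det (\<chi> i j. if j = k then gd $ i $ j else g l $ i $ j)) = det (g l) * tr"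
  proof -
    have "\<And>k. det (\<chi> i j. if j = k then gd $ i $ j else g l $ i $ j)
        = det (\<chi> i j. if j = k then (\<chi> i. gd $ i $ k) $ i else g l $ i $ j)"
      by (rule arg_cong[where f=det]) (simp add: vec_eq_iff)
    also have "\<And>k. \<dots>k = (Gi *v (\<chi> i. gd $ i $ k)) $ k * det (g l)"
      unfolding Gi_def by (rule cramer_inv[OF inv])
    finally have "(\<Sum>k\<in>UNIV. det (\<chi> i j. if j = k then gd $ i $ j else g l $ i $ j))
        = (\<Sum>k\<in>UNIV. (\<Sum>j\<in>UNIV. Gi $ k $ j * gd $ j $ k) * det (g l))"
      by (simp add: matrix_vector_mult_def)
    also have "\<dots> = det (g l) * tr"
      unfolding tr_def by (simp add: sum_distrib_left sum_distrib_right mult_ac) (rule sum.swap)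
    finally show ?thesis .
  qed
  ultimately have detD: "((\<lambda>t. det (g t)) has_real_derivative det (g l) * tr) (at l)" by simp
  define sqd where "sqd = sq l * tr / 2"
  have sqD: "(sq has_real_derivative sqd) (at l)"
  proof -
    have "((\<lambda>t. sqrt (- det (g t))) has_real_derivative inverse (sqrt (- det (g l))) / 2 * (- (det (g l) * tr))) (at l)"
      by (rule DERIV_chain2[OF DERIV_real_sqrt DERIV_minus[OF detD]]) (use detneg[of l] in simp)
    moreover have "inverse (sqrt (- det (g l))) / 2 * (- (det (g l) * tr)) = sqd"
      using sq2 sqpos[of l] unfolding sqd_def sq_def[symmetric] by (simp add: field_simps)
    ultimately show ?thesis unfolding sq_def by simp
  qed
  have rn: "\<And>x y. x > 0 \<Longrightarrow> rho_n rho x y = D 1 0 x y" using partials(1)[OF D0 DD] by blast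
  have rs: "\<And>x y. x > 0 \<Longrightarrow> rho_s rho x y = D 0 1 x y" using partials(2)[OF D0 DD] by blast
  define Rt where "Rt t = rho (n t) (s t)" for t
  define Pt where "Pt t = pressure rho (n t) (s t)" for t
  define Rd where "Rd = D 1 0 (n l) (s l) * nd + D 0 1 (n l) (s l) * sd"
  have RD: "(Rt has_real_derivative Rd) (at l)"
    using comp2[where F="D 0 0", OF DD[OF n_pos[of l], of 0 0] nD sD] D0 unfolding Rt_def Rd_def by simp
  have D10D: "((\<lambda>t. D 1 0 (n t) (s t)) has_real_derivative
       D 2 0 (n l) (s l) * nd + D 1 1 (n l) (s l) * sd) (at l)"
    using comp2[where F="D 1 0", OF DD[OF n_pos[of l], of 1 0] nD sD] by (simp add: numeral_2_eq_2)
  have Pt_eq: "Pt = (\<lambda>t. n t * D 1 0 (n t) (s t) - Rt t)"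
    by (rule ext) (simp add: Pt_def Rt_def pressure_def rn n_pos)
  define Pd where "Pd = nd * D 1 0 (n l) (s l) + (D 2 0 (n l) (s l) * nd + D 1 1 (n l) (s l) * sd) * n l - Rd"
  have PD: "(Pt has_real_derivative Pd) (at l)"
    unfolding Pt_eq Pd_def by (intro DERIV_diff DERIV_mult nD D10D RD)
  define Ud where "Ud t a = lower (g t) (u t) a" for t a
  define Udd where "Udd a = (\<Sum>b\<in>UNIV. gd$a$b * u l $ b + ud$b * g l $a$b)" for a
  have UdD: "\<And>a. ((\<lambda>t. Ud t a) has_real_derivative Udd a) (at l)"
    unfolding Ud_def lower_def Udd_def by (intro DERIV_sum DERIV_mult gD uD)
  define w where "w t = (\<Sum>a\<in>UNIV. u t $ a * (sq t * L a))" for t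
  define wd where "wd = (\<Sum>a\<in>UNIV. ud $ a * (sq l * L a) + sqd * L a * u l $ a)"
  have wD: "(w has_real_derivative wd) (at l)"
    unfolding w_def wd_def by (intro DERIV_sum DERIV_mult uD DERIV_cmult_right sqD)
  have F1: "\<And>t a. (\<Sum>b\<in>UNIV. Tdu rho (g t) (n t) (s t) (u t) a b * vol (g t) b d e f)
      = (Rt t + Pt t) * Ud t a * w t + Pt t * (sq t * L a)"
    unfolding Tdu_eq[OF inv sym] volsq Rt_def Pt_def Ud_def w_def by (rule F1_alg)
  define A where "A = (Rd + Pd) * w l + (Rt l + Pt l) * wd"
  define B where "B = (Rt l + Pt l) * w l"
  define C where "C = Pd + Pt l * tr / 2"
  have XD: "\<And>a. ((\<lambda>t. (Rt t + Pt t) * Ud t a * w t + Pt t * (sq t * L a)) has_real_derivative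
       A * Ud l a + B * Udd a + C * (sq l * L a)) (at l)"
  proof -
    fix a
    have "((\<lambda>t. (Rt t + Pt t) * Ud t a * w t + Pt t * (sq t * L a)) has_real_derivative
       ((Rd + Pd) * Ud l a + Udd a * (Rt l + Pt l)) * w l + wd * ((Rt l + Pt l) * Ud l a)
        + (Pd * (sq l * L a) + sqd * L a * Pt l)) (at l)"
      by (intro DERIV_add DERIV_mult RD PD UdD wD DERIV_cmult_right sqD)
    moreover have "((Rd + Pd) * Ud l a + Udd a * (Rt l + Pt l)) * w l + wd * ((Rt l + Pt l) * Ud l a)
        + (Pd * (sq l * L a) + sqd * L a * Pt l) = A * Ud l a + B * Udd a + C * (sq l * L a)"
      unfolding A_def B_def C_def sqd_def by (simp add: algebra_simps)
    ultimately show "?thesis a" by simp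
  qed
  have dinner: "\<And>a. deriv (\<lambda>t. \<Sum>b\<in>UNIV. Tdu rho (g t) (n t) (s t) (u t) a b * vol (g t) b d e f) l
       = A * Ud l a + B * Udd a + C * (sq l * L a)"
    unfolding F1 by (rule DERIV_imp_deriv[OF XD])
  have Nf: "\<And>t. Nflux (g t) (n t) (u t) d e f = n t * w t" by (simp add: Nflux_def w_def volsq)
  have dN: "deriv (\<lambda>t. Nflux (g t) (n t) (u t) d e f) l = nd * w l + wd * n l"
    unfolding Nf by (rule DERIV_imp_deriv) (intro DERIV_mult nD wD)
  have dSN: "deriv (\<lambda>t. s t * Nflux (g t) (n t) (u t) d e f) l = sd * (n l * w l) + (nd * w l + wd * n l) * s l"
    unfolding Nf by (rule DERIV_imp_deriv) (intro DERIV_mult sD nD wD)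
  define Q where "Q = (\<Sum>a\<in>UNIV. \<Sum>b\<in>UNIV. u l $ a * u l $ b * gd $ a $ b)"
  have K1: "(\<Sum>a\<in>UNIV. u l $ a * Ud l a) = -1"
    using u_norm[of l] by (simp add: Ud_def lower_def sum_distrib_left mult_ac)
  define S where "S = (\<Sum>a\<in>UNIV. \<Sum>b\<in>UNIV. u l $ a * g l $ a $ b * ud $ b)"
  have normD: "((\<lambda>t. \<Sum>a\<in>UNIV. \<Sum>b\<in>UNIV. u t $ a * u t $ b * g t $ a $ b) has_real_derivative
     (\<Sum>a\<in>UNIV. \<Sum>b\<in>UNIV. (ud $ a * u l $ b + ud $ b * u l $ a) * g l $ a $ b + gd $ a $ b * (u l $ a * u l $ b))) (at l)"
    by (intro DERIV_sum DERIV_mult uD gD)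
  have "((\<lambda>t. \<Sum>a\<in>UNIV. \<Sum>b\<in>UNIV. u t $ a * u t $ b * g t $ a $ b) has_real_derivative 0) (at l)"
    unfolding u_norm by (rule DERIV_const)
  then have V0: "(\<Sum>a\<in>UNIV. \<Sum>b\<in>UNIV. (ud $ a * u l $ b + ud $ b * u l $ a) * g l $ a $ b + gd $ a $ b * (u l $ a * u l $ b)) = 0"
    using DERIV_unique[OF normD] by blast
  have V1: "(\<Sum>a\<in>UNIV. \<Sum>b\<in>UNIV. (ud $ a * u l $ b + ud $ b * u l $ a) * g l $ a $ b + gd $ a $ b * (u l $ a * u l $ b))
      = (\<Sum>a\<in>UNIV. \<Sum>b\<in>UNIV. ud $ a * u l $ b * g l $ a $ b) + S + Q"
    by (simp add: S_def Q_def algebra_simps sum.distrib)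
  have V2: "(\<Sum>a\<in>UNIV. \<Sum>b\<in>UNIV. ud $ a * u l $ b * g l $ a $ b) = S"
    unfolding S_def by (subst sum.swap) (simp add: mult_ac sym)
  have V3: "(\<Sum>a\<in>UNIV. u l $ a * Udd a) = Q + S"
    by (simp add: Udd_def S_def Q_def algebra_simps sum.distrib sum_distrib_left)
  have K2: "(\<Sum>a\<in>UNIV. u l $ a * Udd a) = Q / 2" using V0 V1 V2 V3 by linarith
  have K3: "(\<Sum>b\<in>UNIV. \<Sum>c\<in>UNIV. Tuu rho (g l) (n l) (s l) (u l) b c * deriv (\<lambda>t. g t $ b $ c) l)
      = (Rt l + Pt l) * Q + Pt l * tr"
    unfolding Tuu_eq[OF inv sym] Q_def tr_def Rt_def Pt_def Gi_def
    by (simp add: gd_def algebra_simps sum.distrib sum_distrib_left)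
  have Wsum: "(\<Sum>a\<in>UNIV. u l $ a * (sq l * L a)) = w l" by (simp add: w_def)
  have lin: "\<And>X. (\<Sum>a\<in>UNIV. u l $ a * (X * (sq l * L a) - (A * Ud l a + B * Udd a + C * (sq l * L a))))
     = X * w l - A * (\<Sum>a\<in>UNIV. u l $ a * Ud l a) - B * (\<Sum>a\<in>UNIV. u l $ a * Udd a) - C * w l"
    unfolding Wsum[symmetric] by (simp add: algebra_simps sum_subtractf sum.distrib sum_distrib_left)
  have LHS: "(\<Sum>a\<in>UNIV. u l $ a *
            ((1/2) * (\<Sum>b\<in>UNIV. \<Sum>c\<in>UNIV. Tuu rho (g l) (n l) (s l) (u l) b c
                         * deriv (\<lambda>t. g t $ b $ c) l) * vol (g l) a d e f
             - deriv (\<lambda>t. \<Sum>b\<in>UNIV. Tdu rho (g t) (n t) (s t) (u t) a b * vol (g t) b d e f) l))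
      = Rd * w l + (Rt l + Pt l) * wd"
    unfolding dinner unfolding volsq K3 unfolding lin K1 K2 unfolding A_def B_def C_def by (simp add: field_simps)
  show ?thesis unfolding LHS dN dSN chempot_def temperature_def rn[OF n_pos] rs[OF n_pos] Rd_def Pt_def Rt_def pressure_def
    using n_pos[of l] by (simp add: field_simps)
qed

end
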